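(* Let $\mu,\nu\in\mathcal{P}(\mathcal{X})$, $m>0$, take $m_1=m_2=m$ for the marginal cones (with $\mu(B_m)>0$, $\nu(B_m)>0$), let $\alpha$ be a tail function with $\alpha>0$, and let $\tilde\alpha$ be a tail function. For every $f\in\mathcal{F}^{\mu\otimes\nu}_{\alpha,0}$, \[ \int f(\cdot,y)\,\nu(dy)\in\mathcal{F}^{\mu}_{\alpha,\tilde\alpha}\quad\text{and}\quad\int f(x,\cdot)\,\mu(dx)\in\mathcal{F}^{\nu}_{\alpha,\tilde\alpha}. \] Moreover, identifying a function $g$ on $\mathcal{X}$ with the function $(x,y)\mapsto g(x)$ on $\mathcal{X}\times\mathcal{X}$, we have $\mathcal{G}^{\mu}_{\alpha,\tilde\alpha}\subseteq\mathcal{G}^{\mu\otimes\nu}_{\alpha,0}$ and $d_{\mathcal{G}^{\mu\otimes\nu}_{\alpha,0}}(g,\tilde g)\le d_{\mathcal{G}^{\mu}_{\alpha,\tilde\alpha}}(g,\tilde g)$ for all $g,\tilde g\in\mathcal{G}^{\mu}_{\alpha,\tilde\alpha}$; analogously (identifying $g$ with $(x,y)\mapsto g(y)$) $\mathcal{G}^{\nu}_{\alpha,\tilde\alpha}\subseteq\mathcal{G}^{\mu\otimes\nu}_{\alpha,0}$ and $d_{\mathcal{G}^{\mu\otimes\nu}_{\alpha,0}}(g,\tilde g)\le d_{\mathcal{G}^{\nu}_{\alpha,\tilde\alpha}}(g,\tilde g)$ for $g,\tilde g\in\mathcal{G}^{\nu}_{\alpha,\tilde\alpha}$.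
   Context: $\mathcal{X}$ is a Polish space with metric $d_{\mathcal{X}}$, $x_0$ fixed, $B_r=\{x:d_{\mathcal{X}}(x_0,x)\le r\}$, $B_r^{\mathsf c}=\mathcal{X}\setminus B_r$. On $\mathcal{X}\times\mathcal{X}$ use the metric $\max\{d_{\mathcal{X}}(x,\tilde x),d_{\mathcal{X}}(y,\tilde y)\}$ and $\bar B_r=\{\bar x\in\mathcal{X}\times\mathcal{X}: \text{distance from }(x_0,x_0)\le r\}$. A tail function is a non-increasing $\alpha:(0,\infty)\to[0,\infty)$ with $\lim_{r\to\infty}\alpha(r)=0$. For $\rho\in\mathcal{P}(\mathcal{X})$: $\mathcal{F}^{\rho}_{\alpha,\tilde\alpha}$ is the set of $f\in L^2(\rho)$ with $f\mathbf 1_{B_{m_2}}\ge0$ $\rho$-a.s., $\int_{B_r^{\mathsf c}}f_+\,d\rho\le\alpha(r)\int f\,d\rho$ for all $r\ge m_1$, $\int_{B_r^{\mathsf c}}f_-\,d\rho\le\tilde\alpha(r)\int f\,d\rho$ for all $r\ge m_2$; $\mathcal{G}^{\rho}_{\alpha,\tilde\alpha}=\{g\in L^2(\rho):\int fg\,d\rho\ge0\ \forall f\in\mathcal{F}^{\rho}_{\alpha,\tilde\alpha}\}$. On the product: $\mathcal{F}^{\mu\otimes\nu}_{\alpha,0}=\{f\in L^2(\mu\otimes\nu): f\ge0,\ \int_{\bar B_r^{\mathsf c}}f\,d\mu\otimes\nu\le\alpha(r)\int f\,d\mu\otimes\nu\text{ for all }r\ge m\}$ and $\mathcal{G}^{\mu\otimes\nu}_{\alpha,0}=\{g\in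 L^2(\mu\otimes\nu):\int fg\,d\mu\otimes\nu\ge0\ \forall f\in\mathcal{F}^{\mu\otimes\nu}_{\alpha,0}\}$. Hilbert's metric for a cone $C$: $f\le_C g$ iff $g-f\in C$; $f\sim_C g$ iff $f\le_C bg$ and $g\le_C b'f$ for some $b,b'>0$; $M(f,g)=\inf\{b>0:bg-f\in C\}$, $m(f,g)=\sup\{a>0:f-ag\in C\}$; $d_C(f,g)=\log(M/m)$ if $f\sim_C g$, $g\ne0$, and $\infty$ otherwise. *)

theory Defs
  imports "HOL-Probability.Probability"
begin

definition tail_function :: "(real \<Rightarrow> real) \<Rightarrow> bool" where
  "tail_function \<alpha> \<longleftrightarrow>
     (\<forall>r s. 0 < r \<longrightarrow> r \<le> s \<longrightarrow> \<alpha> s \<le> \<alpha> r) \<and>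
     (\<forall>r>0. 0 \<le> \<alpha> r) \<and> (\<alpha> \<longlongrightarrow> 0) at_top"

text \<open>Membership in L2 (functions as representatives of L2 classes).\<close>
definition L2 :: "'b measure \<Rightarrow> ('b \<Rightarrow> real) \<Rightarrow> bool" where
  "L2 M f \<longleftrightarrow> f \<in> borel_measurable M \<and> integrable M (\<lambda>x. (f x)\<^sup>2)"

text \<open>Marginal cone F^rho_{alpha,alpha~} with m1 = m2 = m; ball B_r around x0.\<close>
definition Fcone :: "'a::metric_space measure \<Rightarrow> 'a \<Rightarrow> real \<Rightarrow> (real \<Rightarrow> real) \<Rightarrow> (real \<Rightarrow> real)
     \<Rightarrow> ('a \<Rightarrow> real) set" where
  "Fcone \<rho> x0 m \<alpha> \<alpha>' = {f. L2 \<rho> f \<and>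
     (AE x in \<rho>. dist x0 x \<le> m \<longrightarrow> 0 \<le> f x) \<and>
     (\<forall>r\<ge>m. (\<integral>x. indicator {x. r < dist x0 x} x * max (f x) 0 \<partial>\<rho>)
              \<le> \<alpha> r * (\<integral>x. f x \<partial>\<rho>)) \<and>
     (\<forall>r\<ge>m. (\<integral>x. indicator {x. r < dist x0 x} x * max (- f x) 0 \<partial>\<rho>)
              \<le> \<alpha>' r * (\<integral>x. f x \<partial>\<rho>))}"

definition Gcone :: "'a::metric_space measure \<Rightarrow> 'a \<Rightarrow> real \<Rightarrow> (real \<Rightarrow> real) \<Rightarrow> (real \<Rightarrow> real)
     \<Rightarrow> ('a \<Rightarrow> real) set" where
  "Gcone \<rho> x0 m \<alpha> \<alpha>' = {g. L2 \<rho> g \<and>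
     (\<forall>f\<in>Fcone \<rho> x0 m \<alpha> \<alpha>'. 0 \<le> (\<integral>x. f x * g x \<partial>\<rho>))}"

text \<open>Product cone; the ball uses the max-metric on X x X.\<close>
definition Fcone_prod :: "('a::metric_space \<times> 'a) measure \<Rightarrow> 'a \<Rightarrow> real \<Rightarrow> (real \<Rightarrow> real)
     \<Rightarrow> ('a \<times> 'a \<Rightarrow> real) set" where
  "Fcone_prod P x0 m \<alpha> = {f. L2 P f \<and> (AE z in P. 0 \<le> f z) \<and>
     (\<forall>r\<ge>m. (\<integral>z. indicator {(x,y). r < max (dist x0 x) (dist x0 y)} z * f z \<partial>P)
              \<le> \<alpha> r * (\<integral>z. f z \<partial>P))}"

definition Gcone_prod :: "('a::metric_space \<times> 'a) measure \<Rightarrow> 'a \<Rightarrow> real \<Rightarrow> (real \<Rightarrow> real)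
     \<Rightarrow> ('a \<times> 'a \<Rightarrow> real) set" where
  "Gcone_prod P x0 m \<alpha> = {g. L2 P g \<and>
     (\<forall>f\<in>Fcone_prod P x0 m \<alpha>. 0 \<le> (\<integral>z. f z * g z \<partial>P))}"

text \<open>Hilbert's projective metric of a cone C of functions in L2(M);
  "g \<noteq> 0" is read in L2(M), i.e. g is not M-a.e. zero.\<close>
definition cone_equiv :: "('b \<Rightarrow> real) set \<Rightarrow> ('b \<Rightarrow> real) \<Rightarrow> ('b \<Rightarrow> real) \<Rightarrow> bool" where
  "cone_equiv C f g \<longleftrightarrow> (\<exists>b>0. \<exists>b'>0. (\<lambda>x. b * g x - f x) \<in> C \<and> (\<lambda>x. b' * f x - g x) \<in> C)"

definition cone_M :: "('b \<Rightarrow> real) set \<Rightarrow> ('b \<Rightarrow> real) \<Rightarrow> ('b \<Rightarrow> real) \<Rightarrow> real" where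
  "cone_M C f g = Inf {b. 0 < b \<and> (\<lambda>x. b * g x - f x) \<in> C}"

definition cone_m :: "('b \<Rightarrow> real) set \<Rightarrow> ('b \<Rightarrow> real) \<Rightarrow> ('b \<Rightarrow> real) \<Rightarrow> real" where
  "cone_m C f g = Sup {a. 0 < a \<and> (\<lambda>x. f x - a * g x) \<in> C}"

definition hilbert_dist :: "'b measure \<Rightarrow> ('b \<Rightarrow> real) set \<Rightarrow> ('b \<Rightarrow> real) \<Rightarrow> ('b \<Rightarrow> real) \<Rightarrow> ereal" where
  "hilbert_dist M C f g =
     (if cone_equiv C f g \<and> \<not> (AE x in M. g x = 0)
      then ereal (ln (cone_M C f g / cone_m C f g)) else \<infinity>)"

end

theory Submission
  imports Defs
begin


lemma L2_mult_integrable: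
  fixes f g :: "'b \<Rightarrow> real"
  assumes "L2 M f" "L2 M g" shows "integrable M (\<lambda>x. f x * g x)"
proof (rule Bochner_Integration.integrable_bound[where f="\<lambda>x. (f x)\<^sup>2 + (g x)\<^sup>2"])
  show "integrable M (\<lambda>x. (f x)\<^sup>2 + (g x)\<^sup>2)" using assms unfolding L2_def by auto
  show "(\<lambda>x. f x * g x) \<in> borel_measurable M" using assms unfolding L2_def by auto
  show "AE x in M. norm (f x * g x) \<le> norm ((f x)\<^sup>2 + (g x)\<^sup>2)"
  proof (intro AE_I2)
    fix x
    have "0 \<le> (\<bar>f x\<bar> - \<bar>g x\<bar>)\<^sup>2" by simp
    then have h: "\<bar>f x\<bar> * (\<bar>g x\<bar> * 2) \<le> f x * f x + g x * g x"
      by (simp add: power2_eq_square abs_mult algebra_simps)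
    have "0 \<le> \<bar>f x\<bar> * \<bar>g x\<bar>" by simp
    then have "\<bar>f x * g x\<bar> \<le> (f x)\<^sup>2 + (g x)\<^sup>2"
      unfolding abs_mult power2_eq_square using h by linarith
    then show "norm (f x * g x) \<le> norm ((f x)\<^sup>2 + (g x)\<^sup>2)" by simp
  qed
qed

lemma L2_add:
  fixes f g :: "'b \<Rightarrow> real"
  assumes "L2 M f" "L2 M g" shows "L2 M (\<lambda>x. f x + g x)"
proof -
  have "integrable M (\<lambda>x. (f x)\<^sup>2 + (g x)\<^sup>2 + 2 * (f x * g x))"
    using assms L2_mult_integrable[OF assms] unfolding L2_def by auto
  moreover have "(\<lambda>x. (f x + g x)\<^sup>2) = (\<lambda>x. (f x)\<^sup>2 + (g x)\<^sup>2 + 2 * (f x * g x))"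
    by (auto simp: power2_eq_square algebra_simps)
  ultimately show ?thesis using assms unfolding L2_def by auto
qed

lemma L2_scale:
  fixes f :: "'b \<Rightarrow> real"
  assumes "L2 M f" shows "L2 M (\<lambda>x. c * f x)"
proof -
  have "(\<lambda>x. (c * f x)\<^sup>2) = (\<lambda>x. c\<^sup>2 * (f x)\<^sup>2)" by (auto simp: power_mult_distrib)
  then show ?thesis using assms unfolding L2_def by auto
qed

lemma L2_minus:
  fixes f :: "'b \<Rightarrow> real"
  assumes "L2 M f" shows "L2 M (\<lambda>x. - f x)"
  using L2_scale[OF assms, of "-1"] by simp

lemma L2_diff:
  fixes f g :: "'b \<Rightarrow> real"
  assumes "L2 M f" "L2 M g" shows "L2 M (\<lambda>x. f x - g x)"
  using L2_add[OF assms(1) L2_minus[OF assms(2)]] by simp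

lemma L2_integrable:
  fixes f :: "'b \<Rightarrow> real"
  assumes "finite_measure M" "L2 M f" shows "integrable M f"
  using assms finite_measure.square_integrable_imp_integrable unfolding L2_def by blast


lemma dist_meas:
  fixes x0 :: "'a::metric_space" and M :: "'a measure"
  assumes "sets M = sets borel"
  shows "(\<lambda>x. dist x0 x) \<in> borel_measurable M"
  unfolding measurable_cong_sets[OF assms refl] by (intro borel_measurable_continuous_onI continuous_intros)

lemma marg_fst:
  fixes M1 M2 :: "'a::metric_space measure" and f :: "'a \<times> 'a \<Rightarrow> real"
  assumes P1: "prob_space M1" and S1: "sets M1 = sets borel"
    and P2: "prob_space M2" and S2: "sets M2 = sets borel"
    and m: "0 < m" and ta': "tail_function \<alpha>'"
    and f: "f \<in> Fcone_prod (M1 \<Otimes>\<^sub>M M2) x0 m \<alpha>"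
  shows "(\<lambda>x. \<integral>y. f (x,y) \<partial>M2) \<in> Fcone M1 x0 m \<alpha> \<alpha>'"
proof -
  interpret pair_prob_space M1 M2
    by (simp add: P1 P2 pair_prob_space_def pair_sigma_finite_def prob_space_imp_sigma_finite)
  have d1[measurable]: "(\<lambda>x. dist x0 x) \<in> borel_measurable M1" using S1 by (rule dist_meas)
  have d2[measurable]: "(\<lambda>x. dist x0 x) \<in> borel_measurable M2" using S2 by (rule dist_meas)
  from f have fL2: "L2 (M1 \<Otimes>\<^sub>M M2) f" and fpos: "AE z in M1 \<Otimes>\<^sub>M M2. 0 \<le> f z"
    and ftail: "\<And>r. r \<ge> m \<Longrightarrow> (\<integral>z. indicator {(x,y). r < max (dist x0 x) (dist x0 y)} z * f z \<partial>(M1 \<Otimes>\<^sub>M M2))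
              \<le> \<alpha> r * (\<integral>z. f z \<partial>(M1 \<Otimes>\<^sub>M M2))"
    unfolding Fcone_prod_def by auto
  have fm[measurable]: "f \<in> borel_measurable (M1 \<Otimes>\<^sub>M M2)" using fL2 unfolding L2_def by auto
  have fin: "finite_measure (M1 \<Otimes>\<^sub>M M2)" by (simp add: P.finite_measure_axioms)
  have fint: "integrable (M1 \<Otimes>\<^sub>M M2) f" using L2_integrable[OF fin fL2] .
  have f2int: "integrable (M1 \<Otimes>\<^sub>M M2) (\<lambda>z. (f z)\<^sup>2)" using fL2 unfolding L2_def by auto
  define F where "F x = (\<integral>y. f (x,y) \<partial>M2)" for x
  have Fm[measurable]: "F \<in> borel_measurable M1" unfolding F_def by measurable
  have AEpos: "AE x in M1. 0 \<le> F x"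
    using AE_pair[OF fpos] unfolding F_def
    by (rule AE_mp) (auto intro!: AE_I2 integral_nonneg_AE)
  have Fsq: "AE x in M1. (F x)\<^sup>2 \<le> (\<integral>y. (f (x,y))\<^sup>2 \<partial>M2)"
    using AE_integrable_fst'[OF f2int]
  proof (rule AE_mp, intro AE_I2 impI)
    fix x assume x: "x \<in> space M1" and i2: "integrable M2 (\<lambda>y. (f (x, y))\<^sup>2)"
    have mx[measurable]: "(\<lambda>y. f (x,y)) \<in> borel_measurable M2" using x by measurable
    have i1: "integrable M2 (\<lambda>y. f (x, y))"
      using M2.square_integrable_imp_integrable[OF mx i2] .
    have "0 \<le> M2.variance (\<lambda>y. f (x, y))" by (rule M2.variance_positive)
    also have "\<dots> = (\<integral>y. (f (x,y))\<^sup>2 \<partial>M2) - (F x)\<^sup>2"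
      unfolding F_def using M2.variance_eq[OF i1 i2] by simp
    finally show "(F x)\<^sup>2 \<le> (\<integral>y. (f (x,y))\<^sup>2 \<partial>M2)" by simp
  qed
  have FL2: "L2 M1 F"
  proof -
    have "integrable M1 (\<lambda>x. (F x)\<^sup>2)"
    proof (rule Bochner_Integration.integrable_bound[where f="\<lambda>x. \<integral>y. (f (x,y))\<^sup>2 \<partial>M2"])
      show "integrable M1 (\<lambda>x. \<integral>y. (f (x, y))\<^sup>2 \<partial>M2)"
        using integrable_fst'[OF f2int] by simp
      show "(\<lambda>x. (F x)\<^sup>2) \<in> borel_measurable M1" by measurable
      show "AE x in M1. norm ((F x)\<^sup>2) \<le> norm (\<integral>y. (f (x, y))\<^sup>2 \<partial>M2)"
        using Fsq by (rule AE_mp) (auto intro!: AE_I2 simp: integral_nonneg)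
    qed
    then show ?thesis unfolding L2_def using Fm by simp
  qed
  have intF: "(\<integral>x. F x \<partial>M1) = (\<integral>z. f z \<partial>(M1 \<Otimes>\<^sub>M M2))"
    unfolding F_def using integral_fst'[OF fint] by simp
  have intFnn: "0 \<le> (\<integral>x. F x \<partial>M1)" using AEpos by (rule integral_nonneg_AE)
  have tail1: "(\<integral>x. indicator {x. r < dist x0 x} x * max (F x) 0 \<partial>M1) \<le> \<alpha> r * (\<integral>x. F x \<partial>M1)"
    if r: "r \<ge> m" for r
  proof -
    have int1: "integrable (M1 \<Otimes>\<^sub>M M2) (\<lambda>z. indicator {x. r < dist x0 x} (fst z) * f z)"
      by (rule Bochner_Integration.integrable_bound[OF fint]) (auto intro!: AE_I2 simp: indicator_def)
    have int2: "integrable (M1 \<Otimes>\<^sub>M M2) (\<lambda>z. indicator {(x,y). r < max (dist x0 x) (dist x0 y)} z * f z)"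
      by (rule Bochner_Integration.integrable_bound[OF fint]) (auto intro!: AE_I2 simp: indicator_def)
    have "(\<integral>x. indicator {x. r < dist x0 x} x * max (F x) 0 \<partial>M1)
        = (\<integral>x. (\<integral>y. indicator {x. r < dist x0 x} (fst (x,y)) * f (x,y) \<partial>M2) \<partial>M1)"
    proof (rule integral_cong_AE)
      show "AE x in M1. indicator {x. r < dist x0 x} x * max (F x) 0 =
         (\<integral>y. indicator {x. r < dist x0 x} (fst (x,y)) * f (x,y) \<partial>M2)"
        using AEpos by (rule AE_mp) (auto simp: F_def intro!: AE_I2)
    qed measurable
    also have "\<dots> = (\<integral>z. indicator {x. r < dist x0 x} (fst z) * f z \<partial>(M1 \<Otimes>\<^sub>M M2))"
      by (rule integral_fst'[OF int1])
    also have "\<dots> \<le> (\<integral>z. indicator {(x,y). r < max (dist x0 x) (dist x0 y)} z * f z \<partial>(M1 \<Otimes>\<^sub>M M2))"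
      apply (rule integral_mono_AE[OF int1 int2])
      using fpos apply (rule AE_mp)
      by (auto intro!: AE_I2 simp: indicator_def)
    also have "\<dots> \<le> \<alpha> r * (\<integral>x. F x \<partial>M1)" using ftail[OF r] intF by simp
    finally show ?thesis .
  qed
  have tail2: "(\<integral>x. indicator {x. r < dist x0 x} x * max (- F x) 0 \<partial>M1) \<le> \<alpha>' r * (\<integral>x. F x \<partial>M1)"
    if r: "r \<ge> m" for r
  proof -
    have "(\<integral>x. indicator {x. r < dist x0 x} x * max (- F x) 0 \<partial>M1) = (\<integral>x. 0 \<partial>M1)"
    proof (rule integral_cong_AE)
      show "AE x in M1. indicator {x. r < dist x0 x} x * max (- F x) 0 = 0"
        using AEpos by (rule AE_mp) (auto intro!: AE_I2)
    qed measurable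
    moreover have "0 \<le> \<alpha>' r" using ta' r m unfolding tail_function_def by auto
    ultimately show ?thesis using intFnn by simp
  qed
  have AEb: "AE x in M1. dist x0 x \<le> m \<longrightarrow> 0 \<le> F x"
    using AEpos by (rule AE_mp) (auto intro!: AE_I2)
  show ?thesis
    unfolding Fcone_def F_def[symmetric]
    using FL2 tail1 tail2 AEb by auto
qed



lemma int_swap:
  fixes f :: "'a \<times> 'b \<Rightarrow> real"
  assumes "pair_sigma_finite M1 M2" "f \<in> borel_measurable (M1 \<Otimes>\<^sub>M M2)"
  shows "(\<integral>z. f (snd z, fst z) \<partial>(M2 \<Otimes>\<^sub>M M1)) = (\<integral>z. f z \<partial>(M1 \<Otimes>\<^sub>M M2))"
  using pair_sigma_finite.integral_product_swap[OF assms] by (simp add: case_prod_beta')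

lemma AE_swap:
  assumes "pair_sigma_finite M1 M2" "{z\<in>space (M1 \<Otimes>\<^sub>M M2). P z} \<in> sets (M1 \<Otimes>\<^sub>M M2)"
    and "AE z in M1 \<Otimes>\<^sub>M M2. P z"
  shows "AE z in M2 \<Otimes>\<^sub>M M1. P (snd z, fst z)"
proof -
  have "AE z in distr (M2 \<Otimes>\<^sub>M M1) (M1 \<Otimes>\<^sub>M M2) (\<lambda>(x, y). (y, x)). P z"
    using assms(3) by (subst (asm) pair_sigma_finite.distr_pair_swap[OF assms(1)])
  then have "AE z in M2 \<Otimes>\<^sub>M M1. P ((\<lambda>(x, y). (y, x)) z)"
    using AE_distr_iff[OF measurable_pair_swap' assms(2)] by simp
  then show ?thesis by (simp add: case_prod_beta')
qed

lemma L2_swap: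
  fixes f :: "'a \<times> 'b \<Rightarrow> real"
  assumes "pair_sigma_finite M1 M2" "L2 (M1 \<Otimes>\<^sub>M M2) f"
  shows "L2 (M2 \<Otimes>\<^sub>M M1) (\<lambda>z. f (snd z, fst z))"
proof -
  interpret pair_sigma_finite M1 M2 by fact
  have [measurable]: "f \<in> borel_measurable (M1 \<Otimes>\<^sub>M M2)" using assms(2) unfolding L2_def by auto
  have "integrable (M2 \<Otimes>\<^sub>M M1) (\<lambda>(x,y). (f (y,x))\<^sup>2)"
    using integrable_product_swap[of "\<lambda>z. (f z)\<^sup>2"] assms(2) unfolding L2_def by auto
  then show ?thesis unfolding L2_def by (simp add: case_prod_beta')
qed

lemma Fprod_swap:
  fixes f :: "'a::metric_space \<times> 'a \<Rightarrow> real"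
  assumes ps: "pair_sigma_finite M1 M2" and f: "f \<in> Fcone_prod (M1 \<Otimes>\<^sub>M M2) x0 m \<alpha>"
    and S1: "sets M1 = sets borel" and S2: "sets M2 = sets borel"
  shows "(\<lambda>z. f (snd z, fst z)) \<in> Fcone_prod (M2 \<Otimes>\<^sub>M M1) x0 m \<alpha>"
proof -
  interpret pair_sigma_finite M1 M2 by fact
  have d1[measurable]: "(\<lambda>x. dist x0 x) \<in> borel_measurable M1" using S1 by (rule dist_meas)
  have d2[measurable]: "(\<lambda>x. dist x0 x) \<in> borel_measurable M2" using S2 by (rule dist_meas)
  from f have fL2: "L2 (M1 \<Otimes>\<^sub>M M2) f" and fpos: "AE z in M1 \<Otimes>\<^sub>M M2. 0 \<le> f z"
    and ftail: "\<And>r. r \<ge> m \<Longrightarrow> (\<integral>z. indicator {(x,y). r < max (dist x0 x) (dist x0 y)} z * f z \<partial>(M1 \<Otimes>\<^sub>M M2))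
              \<le> \<alpha> r * (\<integral>z. f z \<partial>(M1 \<Otimes>\<^sub>M M2))"
    unfolding Fcone_prod_def by auto
  have fm[measurable]: "f \<in> borel_measurable (M1 \<Otimes>\<^sub>M M2)" using fL2 unfolding L2_def by auto
  have "AE z in M2 \<Otimes>\<^sub>M M1. 0 \<le> f (snd z, fst z)"
    by (rule AE_swap[OF ps _ fpos]) measurable
  moreover have "(\<integral>z. indicator {(x,y). r < max (dist x0 x) (dist x0 y)} z * f (snd z, fst z) \<partial>(M2 \<Otimes>\<^sub>M M1))
              \<le> \<alpha> r * (\<integral>z. f (snd z, fst z) \<partial>(M2 \<Otimes>\<^sub>M M1))" if r: "r \<ge> m" for r
  proof -
    have mi: "(\<lambda>z. indicator {(x,y). r < max (dist x0 x) (dist x0 y)} z * f z) \<in> borel_measurable (M1 \<Otimes>\<^sub>M M2)"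
      by measurable
    have "(\<integral>z. indicator {(x,y). r < max (dist x0 x) (dist x0 y)} z * f (snd z, fst z) \<partial>(M2 \<Otimes>\<^sub>M M1))
        = (\<integral>z. indicator {(x,y). r < max (dist x0 x) (dist x0 y)} (snd z, fst z) * f (snd z, fst z) \<partial>(M2 \<Otimes>\<^sub>M M1))"
      by (intro Bochner_Integration.integral_cong refl) (auto simp: indicator_def max.commute)
    also have "\<dots> = (\<integral>z. indicator {(x,y). r < max (dist x0 x) (dist x0 y)} z * f z \<partial>(M1 \<Otimes>\<^sub>M M2))"
      using int_swap[OF ps mi] by simp
    finally show ?thesis using ftail[OF r] int_swap[OF ps fm] by simp
  qed
  ultimately show ?thesis using L2_swap[OF ps fL2] unfolding Fcone_prod_def by auto
qed


lemma Gprod_swap: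
  fixes g :: "'a::metric_space \<times> 'a \<Rightarrow> real"
  assumes ps: "pair_sigma_finite M1 M2" and g: "g \<in> Gcone_prod (M1 \<Otimes>\<^sub>M M2) x0 m \<alpha>"
    and S1: "sets M1 = sets borel" and S2: "sets M2 = sets borel"
  shows "(\<lambda>z. g (snd z, fst z)) \<in> Gcone_prod (M2 \<Otimes>\<^sub>M M1) x0 m \<alpha>"
proof -
  interpret pair_sigma_finite M1 M2 by fact
  have ps2: "pair_sigma_finite M2 M1" by (simp add: pair_sigma_finite_def M1.sigma_finite_measure_axioms M2.sigma_finite_measure_axioms)
  from g have gL2: "L2 (M1 \<Otimes>\<^sub>M M2) g" and gpos: "\<And>f. f \<in> Fcone_prod (M1 \<Otimes>\<^sub>M M2) x0 m \<alpha> \<Longrightarrow> 0 \<le> (\<integral>z. f z * g z \<partial>(M1 \<Otimes>\<^sub>M M2))"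
    unfolding Gcone_prod_def by auto
  have gm[measurable]: "g \<in> borel_measurable (M1 \<Otimes>\<^sub>M M2)" using gL2 unfolding L2_def by auto
  have "0 \<le> (\<integral>z. f z * g (snd z, fst z) \<partial>(M2 \<Otimes>\<^sub>M M1))" if f: "f \<in> Fcone_prod (M2 \<Otimes>\<^sub>M M1) x0 m \<alpha>" for f
  proof -
    have fm[measurable]: "f \<in> borel_measurable (M2 \<Otimes>\<^sub>M M1)" using f unfolding Fcone_prod_def L2_def by auto
    have "0 \<le> (\<integral>z. f (snd z, fst z) * g z \<partial>(M1 \<Otimes>\<^sub>M M2))"
      using gpos[OF Fprod_swap[OF ps2 f S2 S1]] .
    also have "\<dots> = (\<integral>z. f z * g (snd z, fst z) \<partial>(M2 \<Otimes>\<^sub>M M1))"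
      using int_swap[OF ps2, of "\<lambda>z. f z * g (snd z, fst z)"] by simp
    finally show ?thesis .
  qed
  then show ?thesis using L2_swap[OF ps gL2] unfolding Gcone_prod_def by auto
qed

lemma integrable_lift_fst:
  fixes h :: "'a \<Rightarrow> real"
  assumes "pair_prob_space M1 M2" "integrable M1 h"
  shows "integrable (M1 \<Otimes>\<^sub>M M2) (\<lambda>z. h (fst z))"
proof -
  interpret pair_prob_space M1 M2 by fact
  have [measurable]: "h \<in> borel_measurable M1" using assms(2) by auto
  show ?thesis
  proof (rule Fubini_integrable)
    show "(\<lambda>z. h (fst z)) \<in> borel_measurable (M1 \<Otimes>\<^sub>M M2)" by measurable
    show "integrable M1 (\<lambda>x. \<integral>y. norm (h (fst (x, y))) \<partial>M2)"
      using assms(2) by (simp add: M2.prob_space)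
    show "AE x in M1. integrable M2 (\<lambda>y. h (fst (x, y)))" by simp
  qed
qed

lemma Glift_fst:
  fixes M1 M2 :: "'a::metric_space measure" and g :: "'a \<Rightarrow> real"
  assumes P1: "prob_space M1" and S1: "sets M1 = sets borel"
    and P2: "prob_space M2" and S2: "sets M2 = sets borel"
    and m: "0 < m" and ta': "tail_function \<alpha>'"
    and g: "g \<in> Gcone M1 x0 m \<alpha> \<alpha>'"
  shows "(\<lambda>z. g (fst z)) \<in> Gcone_prod (M1 \<Otimes>\<^sub>M M2) x0 m \<alpha>"
proof -
  have pp: "pair_prob_space M1 M2"
    by (simp add: P1 P2 pair_prob_space_def pair_sigma_finite_def prob_space_imp_sigma_finite)
  interpret pair_prob_space M1 M2 by fact
  from g have gL2: "L2 M1 g" and gpos: "\<And>f. f \<in> Fcone M1 x0 m \<alpha> \<alpha>' \<Longrightarrow> 0 \<le> (\<integral>x. f x * g x \<partial>M1)"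
    unfolding Gcone_def by auto
  have gm[measurable]: "g \<in> borel_measurable M1" using gL2 unfolding L2_def by auto
  have gL2': "L2 (M1 \<Otimes>\<^sub>M M2) (\<lambda>z. g (fst z))"
    unfolding L2_def using integrable_lift_fst[OF pp, of "\<lambda>x. (g x)\<^sup>2"] gL2 unfolding L2_def by auto
  have "0 \<le> (\<integral>z. f z * g (fst z) \<partial>(M1 \<Otimes>\<^sub>M M2))" if f: "f \<in> Fcone_prod (M1 \<Otimes>\<^sub>M M2) x0 m \<alpha>" for f
  proof -
    have fL2: "L2 (M1 \<Otimes>\<^sub>M M2) f" using f unfolding Fcone_prod_def by auto
    have int: "integrable (M1 \<Otimes>\<^sub>M M2) (\<lambda>z. f z * g (fst z))" using L2_mult_integrable[OF fL2 gL2'] .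
    have "(\<integral>z. f z * g (fst z) \<partial>(M1 \<Otimes>\<^sub>M M2)) = (\<integral>x. (\<integral>y. f (x,y) * g (fst (x,y)) \<partial>M2) \<partial>M1)"
      using integral_fst'[OF int] by simp
    also have "\<dots> = (\<integral>x. (\<integral>y. f (x,y) \<partial>M2) * g x \<partial>M1)" by simp
    also have "\<dots> \<ge> 0" using gpos[OF marg_fst[OF P1 S1 P2 S2 m ta' f]] .
    finally show ?thesis by simp
  qed
  then show ?thesis using gL2' unfolding Gcone_prod_def by auto
qed



lemma int_prod_sep:
  fixes \<phi> \<psi> :: "_ \<Rightarrow> real"
  assumes pp: "pair_prob_space M1 M2" and i1: "integrable M1 \<phi>" and i2: "integrable M2 \<psi>"
  shows "integrable (M1 \<Otimes>\<^sub>M M2) (\<lambda>z. \<phi> (fst z) * \<psi> (snd z))"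
    and "(\<integral>z. \<phi> (fst z) * \<psi> (snd z) \<partial>(M1 \<Otimes>\<^sub>M M2)) = (\<integral>x. \<phi> x \<partial>M1) * (\<integral>y. \<psi> y \<partial>M2)"
proof -
  interpret pair_prob_space M1 M2 by fact
  have [measurable]: "\<phi> \<in> borel_measurable M1" "\<psi> \<in> borel_measurable M2" using i1 i2 by auto
  show int: "integrable (M1 \<Otimes>\<^sub>M M2) (\<lambda>z. \<phi> (fst z) * \<psi> (snd z))"
  proof (rule Fubini_integrable)
    show "(\<lambda>z. \<phi> (fst z) * \<psi> (snd z)) \<in> borel_measurable (M1 \<Otimes>\<^sub>M M2)" by measurable
    have "integrable M1 (\<lambda>x. \<bar>\<phi> x\<bar> * (\<integral>y. \<bar>\<psi> y\<bar> \<partial>M2))"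
      using i1 by (intro integrable_mult_left) auto
    then show "integrable M1 (\<lambda>x. \<integral>y. norm (\<phi> (fst (x, y)) * \<psi> (snd (x, y))) \<partial>M2)"
      by (simp add: abs_mult)
    show "AE x in M1. integrable M2 (\<lambda>y. \<phi> (fst (x, y)) * \<psi> (snd (x, y)))"
      using i2 by (auto intro!: AE_I2 integrable_mult_right)
  qed
  show "(\<integral>z. \<phi> (fst z) * \<psi> (snd z) \<partial>(M1 \<Otimes>\<^sub>M M2)) = (\<integral>x. \<phi> x \<partial>M1) * (\<integral>y. \<psi> y \<partial>M2)"
    using integral_fst'[OF int] by simp
qed

lemma half_pointed:
  fixes M1 M2 :: "'a::metric_space measure" and h :: "'a \<Rightarrow> real"
  assumes P1: "prob_space M1" and S1: "sets M1 = sets borel"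
    and P2: "prob_space M2" and S2: "sets M2 = sets borel"
    and m: "0 < m" and ta: "tail_function \<alpha>" and apos: "\<forall>r>0. 0 < \<alpha> r"
    and p1: "0 < measure M1 {x. dist x0 x \<le> m}" and p2: "0 < measure M2 {x. dist x0 x \<le> m}"
    and hL2: "L2 M1 h"
    and hp: "(\<lambda>z. h (fst z)) \<in> Gcone_prod (M1 \<Otimes>\<^sub>M M2) x0 m \<alpha>"
    and hn: "(\<lambda>z. - h (fst z)) \<in> Gcone_prod (M1 \<Otimes>\<^sub>M M2) x0 m \<alpha>"
  shows "AE x in M1. h x \<le> 0"
proof -
  have pp: "pair_prob_space M1 M2"
    by (simp add: P1 P2 pair_prob_space_def pair_sigma_finite_def prob_space_imp_sigma_finite)
  interpret pair_prob_space M1 M2 by fact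
  have d1[measurable]: "(\<lambda>x. dist x0 x) \<in> borel_measurable M1" using S1 by (rule dist_meas)
  have d2[measurable]: "(\<lambda>x. dist x0 x) \<in> borel_measurable M2" using S2 by (rule dist_meas)
  have hm[measurable]: "h \<in> borel_measurable M1" using hL2 unfolding L2_def by auto
  have hint: "integrable M1 h" using L2_integrable[OF M1.finite_measure_axioms hL2] .
  have sp1: "space M1 = UNIV" using sets_eq_imp_space_eq[OF S1] by simp
  have sp2: "space M2 = UNIV" using sets_eq_imp_space_eq[OF S2] by simp
  have zero: "(\<integral>z. f z * h (fst z) \<partial>(M1 \<Otimes>\<^sub>M M2)) = 0" if f: "f \<in> Fcone_prod (M1 \<Otimes>\<^sub>M M2) x0 m \<alpha>" for f
  proof -
    have "0 \<le> (\<integral>z. f z * h (fst z) \<partial>(M1 \<Otimes>\<^sub>M M2))" using hp f unfolding Gcone_prod_def by auto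
    moreover have "0 \<le> (\<integral>z. f z * - h (fst z) \<partial>(M1 \<Otimes>\<^sub>M M2))" using hn f unfolding Gcone_prod_def by auto
    ultimately show ?thesis by simp
  qed
  define p where "p = measure M1 {x. dist x0 x \<le> m}"
  define c where "c = measure M2 {x. dist x0 x \<le> m}"
  have Am[measurable]: "{x. dist x0 x \<le> m} \<in> sets M1"
  proof -
    have "{x \<in> space M1. dist x0 x \<le> m} \<in> sets M1" by measurable
    then show ?thesis using sp1 by simp
  qed
  have Bm[measurable]: "{x. dist x0 x \<le> m} \<in> sets M2"
  proof -
    have "{x \<in> space M2. dist x0 x \<le> m} \<in> sets M2" by measurable
    then show ?thesis using sp2 by simp
  qed
  have intB: "integrable M2 (indicator {x. dist x0 x \<le> m} :: _ \<Rightarrow> real)" by (intro integrable_real_indicator Bm) (simp add: M2.emeasure_finite less_top[symmetric])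
  have intB': "(\<integral>y. indicator {x. dist x0 x \<le> m} y \<partial>M2) = c" unfolding c_def using sp2 by simp
  have intA: "integrable M1 (indicator {x. dist x0 x \<le> m} :: _ \<Rightarrow> real)" by (intro integrable_real_indicator Am) (simp add: M1.emeasure_finite less_top[symmetric])
  have intA': "(\<integral>x. indicator {x. dist x0 x \<le> m} x \<partial>M1) = p" unfolding p_def using sp1 by simp
  have Rcase: "AE x in M1. dist x0 x \<le> R \<longrightarrow> h x \<le> 0" if R: "R \<ge> m" for R
  proof -
    define u where "u x = indicator {x. dist x0 x \<le> R} x * max (h x) 0" for x
    have um[measurable]: "u \<in> borel_measurable M1" unfolding u_def by measurable
    have unn: "0 \<le> u x" for x unfolding u_def by (simp add: indicator_def)
    have uL2: "L2 M1 u"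
    proof -
      have "integrable M1 (\<lambda>x. (u x)\<^sup>2)"
      proof (rule Bochner_Integration.integrable_bound[where f="\<lambda>x. (h x)\<^sup>2"])
        show "integrable M1 (\<lambda>x. (h x)\<^sup>2)" using hL2 unfolding L2_def by auto
        show "(\<lambda>x. (u x)\<^sup>2) \<in> borel_measurable M1" by measurable
        show "AE x in M1. norm ((u x)\<^sup>2) \<le> norm ((h x)\<^sup>2)"
          by (intro AE_I2) (auto simp: u_def indicator_def abs_le_square_iff power2_eq_square max_def)
      qed
      then show ?thesis unfolding L2_def using um by simp
    qed
    have uint: "integrable M1 u" using L2_integrable[OF M1.finite_measure_axioms uL2] .
    define U where "U = (\<integral>x. u x \<partial>M1)"
    have Unn: "0 \<le> U" unfolding U_def by (simp add: unn)
    have aR: "0 < \<alpha> R" using apos R m by auto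
    have pp0: "0 < p" using p1 p_def by simp
    have cc0: "0 < c" using p2 c_def by simp
    define K where "K = U / (\<alpha> R * p)"
    have Knn: "0 \<le> K" unfolding K_def using Unn aR pp0 by simp
    have KU: "\<alpha> R * K * p = U" unfolding K_def using aR pp0 by simp
    define a where "a x = u x + K * indicator {x. dist x0 x \<le> m} x" for x
    have am[measurable]: "a \<in> borel_measurable M1" unfolding a_def by measurable
    have ann: "0 \<le> a x" for x unfolding a_def using unn Knn by simp
    have aint: "integrable M1 a" unfolding a_def using uint intA by auto
    have aI: "(\<integral>x. a x \<partial>M1) = U + K * p" unfolding a_def U_def using uint intA intA' by simp
    define f1 where "f1 z = K * indicator {x. dist x0 x \<le> m} (fst z) * indicator {x. dist x0 x \<le> m} (snd z)" for z :: "'a \<times> 'a"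
    define f2 where "f2 z = a (fst z) * indicator {x. dist x0 x \<le> m} (snd z)" for z :: "'a \<times> 'a"
    have f1m[measurable]: "f1 \<in> borel_measurable (M1 \<Otimes>\<^sub>M M2)" unfolding f1_def by measurable
    have f2m[measurable]: "f2 \<in> borel_measurable (M1 \<Otimes>\<^sub>M M2)" unfolding f2_def by measurable
    have f1nn: "0 \<le> f1 z" for z unfolding f1_def using Knn by (simp add: indicator_def)
    have f2nn: "0 \<le> f2 z" for z unfolding f2_def using ann by (simp add: indicator_def)
    have indL2: "L2 M1 (\<lambda>x. K * indicator {x. dist x0 x \<le> m} x)"
    proof (rule L2_scale)
      have "(\<lambda>x. (indicator {x. dist x0 x \<le> m} x :: real)\<^sup>2) = indicator {x. dist x0 x \<le> m}"
        by (auto simp: indicator_def)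
      then show "L2 M1 (indicator {x. dist x0 x \<le> m})" using intA unfolding L2_def by auto
    qed
    have aL2: "L2 M1 a" unfolding a_def by (rule L2_add[OF uL2 indL2])
    have f1L2: "L2 (M1 \<Otimes>\<^sub>M M2) f1"
    proof -
      have "integrable (M1 \<Otimes>\<^sub>M M2) (\<lambda>z. (f1 z)\<^sup>2)"
      proof (rule Bochner_Integration.integrable_bound[where f="\<lambda>z. K\<^sup>2"])
        show "integrable (M1 \<Otimes>\<^sub>M M2) (\<lambda>z. K\<^sup>2)" by simp
        show "(\<lambda>z. (f1 z)\<^sup>2) \<in> borel_measurable (M1 \<Otimes>\<^sub>M M2)" by measurable
        show "AE z in M1 \<Otimes>\<^sub>M M2. norm ((f1 z)\<^sup>2) \<le> norm (K\<^sup>2)"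
          by (intro AE_I2) (auto simp: f1_def indicator_def)
      qed
      then show ?thesis unfolding L2_def by simp
    qed
    have f2int: "integrable (M1 \<Otimes>\<^sub>M M2) f2"
      unfolding f2_def by (rule int_prod_sep(1)[OF pp aint intB])
    have f2I: "(\<integral>z. f2 z \<partial>(M1 \<Otimes>\<^sub>M M2)) = (U + K * p) * c"
      unfolding f2_def using int_prod_sep(2)[OF pp aint intB] aI intB' by simp
    have f2L2: "L2 (M1 \<Otimes>\<^sub>M M2) f2"
    proof -
      have "integrable (M1 \<Otimes>\<^sub>M M2) (\<lambda>z. (f2 z)\<^sup>2)"
      proof (rule Bochner_Integration.integrable_bound[where f="\<lambda>z. (a (fst z))\<^sup>2"])
        show "integrable (M1 \<Otimes>\<^sub>M M2) (\<lambda>z. (a (fst z))\<^sup>2)"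
          using integrable_lift_fst[OF pp, of "\<lambda>x. (a x)\<^sup>2"] aL2 unfolding L2_def by simp
        show "(\<lambda>z. (f2 z)\<^sup>2) \<in> borel_measurable (M1 \<Otimes>\<^sub>M M2)" by measurable
        show "AE z in M1 \<Otimes>\<^sub>M M2. norm ((f2 z)\<^sup>2) \<le> norm ((a (fst z))\<^sup>2)"
          by (intro AE_I2) (auto simp: f2_def indicator_def)
      qed
      then show ?thesis unfolding L2_def by simp
    qed
    have f1F: "f1 \<in> Fcone_prod (M1 \<Otimes>\<^sub>M M2) x0 m \<alpha>"
    proof -
      have "(\<integral>z. indicator {(x,y). r < max (dist x0 x) (dist x0 y)} z * f1 z \<partial>(M1 \<Otimes>\<^sub>M M2))
              \<le> \<alpha> r * (\<integral>z. f1 z \<partial>(M1 \<Otimes>\<^sub>M M2))" if r: "r \<ge> m" for r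
      proof -
        have "(\<integral>z. indicator {(x,y). r < max (dist x0 x) (dist x0 y)} z * f1 z \<partial>(M1 \<Otimes>\<^sub>M M2)) = (\<integral>z. 0 \<partial>(M1 \<Otimes>\<^sub>M M2))"
          by (intro Bochner_Integration.integral_cong refl) (use r in \<open>auto simp: f1_def indicator_def\<close>)
        moreover have "0 \<le> \<alpha> r * (\<integral>z. f1 z \<partial>(M1 \<Otimes>\<^sub>M M2))"
          using apos r m f1nn by (intro mult_nonneg_nonneg integral_nonneg) (auto intro: less_imp_le)
        ultimately show ?thesis by simp
      qed
      then show ?thesis unfolding Fcone_prod_def using f1L2 f1nn by auto
    qed
    have f2F: "f2 \<in> Fcone_prod (M1 \<Otimes>\<^sub>M M2) x0 m \<alpha>"
    proof -
      have "(\<integral>z. indicator {(x,y). r < max (dist x0 x) (dist x0 y)} z * f2 z \<partial>(M1 \<Otimes>\<^sub>M M2))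
              \<le> \<alpha> r * (\<integral>z. f2 z \<partial>(M1 \<Otimes>\<^sub>M M2))" if r: "r \<ge> m" for r
      proof -
        have ar: "0 < \<alpha> r" using apos r m by auto
        have RHS: "0 \<le> \<alpha> r * (\<integral>z. f2 z \<partial>(M1 \<Otimes>\<^sub>M M2))"
          using ar f2nn by (intro mult_nonneg_nonneg integral_nonneg) auto
        have iL: "integrable (M1 \<Otimes>\<^sub>M M2) (\<lambda>z. indicator {(x,y). r < max (dist x0 x) (dist x0 y)} z * f2 z)"
          by (rule Bochner_Integration.integrable_bound[OF f2int]) (auto intro!: AE_I2 simp: indicator_def)
        show ?thesis
        proof (cases "r < R")
          case True
          have iu: "integrable (M1 \<Otimes>\<^sub>M M2) (\<lambda>z. u (fst z) * indicator {x. dist x0 x \<le> m} (snd z))"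
            by (rule int_prod_sep(1)[OF pp uint intB])
          have "(\<integral>z. indicator {(x,y). r < max (dist x0 x) (dist x0 y)} z * f2 z \<partial>(M1 \<Otimes>\<^sub>M M2))
              \<le> (\<integral>z. u (fst z) * indicator {x. dist x0 x \<le> m} (snd z) \<partial>(M1 \<Otimes>\<^sub>M M2))"
            by (rule integral_mono[OF iL iu]) (use r unn in \<open>auto simp: f2_def a_def indicator_def\<close>)
          also have "\<dots> = U * c" using int_prod_sep(2)[OF pp uint intB] intB' U_def by simp
          also have "\<dots> = \<alpha> R * K * p * c" using KU by simp
          also have "\<dots> \<le> \<alpha> r * K * p * c"
          proof -
            have "\<alpha> R \<le> \<alpha> r" using ta r m True unfolding tail_function_def by auto
            then show ?thesis using Knn pp0 cc0 by (intro mult_right_mono) auto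
          qed
          also have "\<dots> \<le> \<alpha> r * ((U + K * p) * c)"
            using ar Unn cc0 by (simp add: algebra_simps)
          finally show ?thesis using f2I by simp
        next
          case False
          have "(\<integral>z. indicator {(x,y). r < max (dist x0 x) (dist x0 y)} z * f2 z \<partial>(M1 \<Otimes>\<^sub>M M2)) = (\<integral>z. 0 \<partial>(M1 \<Otimes>\<^sub>M M2))"
            by (intro Bochner_Integration.integral_cong refl) (use r False in \<open>auto simp: f2_def a_def u_def indicator_def\<close>)
          then show ?thesis using RHS by simp
        qed
      qed
      then show ?thesis unfolding Fcone_prod_def using f2L2 f2nn by auto
    qed
    define I1 where "I1 = (\<integral>x. indicator {x. dist x0 x \<le> m} x * h x \<partial>M1)"
    have iAh: "integrable M1 (\<lambda>x. K * (indicator {x. dist x0 x \<le> m} x * h x))"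
      using integrable_mult_indicator[OF Am hint] by simp
    have iuh: "integrable M1 (\<lambda>x. u x * h x)" by (rule L2_mult_integrable[OF uL2 hL2])
    have "0 = (\<integral>z. f1 z * h (fst z) \<partial>(M1 \<Otimes>\<^sub>M M2))" using zero[OF f1F] by simp
    also have "\<dots> = (\<integral>z. (K * (indicator {x. dist x0 x \<le> m} (fst z) * h (fst z))) * indicator {x. dist x0 x \<le> m} (snd z) \<partial>(M1 \<Otimes>\<^sub>M M2))"
      by (intro Bochner_Integration.integral_cong refl) (simp add: f1_def algebra_simps)
    also have "\<dots> = K * I1 * c" using int_prod_sep(2)[OF pp iAh intB] intB' I1_def by simp
    finally have e1: "K * I1 * c = 0" by simp
    have "0 = (\<integral>z. f2 z * h (fst z) \<partial>(M1 \<Otimes>\<^sub>M M2))" using zero[OF f2F] by simp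
    also have "\<dots> = (\<integral>z. (u (fst z) * h (fst z) + K * (indicator {x. dist x0 x \<le> m} (fst z) * h (fst z))) * indicator {x. dist x0 x \<le> m} (snd z) \<partial>(M1 \<Otimes>\<^sub>M M2))"
      by (intro Bochner_Integration.integral_cong refl) (simp add: f2_def a_def algebra_simps)
    also have "\<dots> = ((\<integral>x. u x * h x \<partial>M1) + K * I1) * c"
      using int_prod_sep(2)[OF pp Bochner_Integration.integrable_add[OF iuh iAh] intB] intB' I1_def
        Bochner_Integration.integral_add[OF iuh iAh] by simp
    finally have e2: "0 = ((\<integral>x. u x * h x \<partial>M1) + K * I1) * c" .
    have "(\<integral>x. u x * h x \<partial>M1) * c = ((\<integral>x. u x * h x \<partial>M1) + K * I1) * c - K * I1 * c"
      by (simp add: algebra_simps)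
    then have "(\<integral>x. u x * h x \<partial>M1) * c = 0" using e1 e2 by simp
    then have uh0: "(\<integral>x. u x * h x \<partial>M1) = 0" using cc0 by simp
    have uhnn: "0 \<le> u x * h x" for x unfolding u_def by (simp add: indicator_def max_def)
    have "AE x in M1. u x * h x = 0"
      using integral_nonneg_eq_0_iff_AE[OF iuh] uh0 uhnn by simp
    then show ?thesis
      by (rule AE_mp) (auto intro!: AE_I2 simp: u_def indicator_def max_def split: if_splits)
  qed
  have "AE x in M1. \<forall>n::nat. dist x0 x \<le> m + real n \<longrightarrow> h x \<le> 0"
    unfolding AE_all_countable using Rcase m by auto
  then show ?thesis
  proof (rule AE_mp, intro AE_I2 impI)
    fix x assume H: "\<forall>n::nat. dist x0 x \<le> m + real n \<longrightarrow> h x \<le> 0"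
    obtain n :: nat where "dist x0 x \<le> real n" using real_arch_simple by blast
    then show "h x \<le> 0" using H m by (meson add_increasing less_imp_le order_trans) 
  qed
qed



lemma hilbert_mono:
  fixes C :: "('b \<Rightarrow> real) set" and D :: "('c \<Rightarrow> real) set" and \<pi> :: "'c \<Rightarrow> 'b"
  assumes lift: "\<And>h. h \<in> C \<Longrightarrow> (\<lambda>z. h (\<pi> z)) \<in> D"
    and Cscale: "\<And>h c. h \<in> C \<Longrightarrow> 0 < c \<Longrightarrow> (\<lambda>x. c * h x) \<in> C"
    and Dscale: "\<And>h c. h \<in> D \<Longrightarrow> 0 < c \<Longrightarrow> (\<lambda>z. c * h z) \<in> D"
    and Dadd: "\<And>h k. h \<in> D \<Longrightarrow> k \<in> D \<Longrightarrow> (\<lambda>z. h z + k z) \<in> D"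
    and gC: "g' \<in> C"
    and pointed: "(\<lambda>z. - g' (\<pi> z)) \<in> D \<Longrightarrow> AE x in M. g' x = 0"
    and AEtrans: "(AE z in N. g' (\<pi> z) = 0) \<Longrightarrow> AE x in M. g' x = 0"
  shows "hilbert_dist N D (\<lambda>z. g (\<pi> z)) (\<lambda>z. g' (\<pi> z)) \<le> hilbert_dist M C g g'"
proof (cases "cone_equiv C g g' \<and> \<not> (AE x in M. g' x = 0)")
  case False
  then have "hilbert_dist M C g g' = \<infinity>" unfolding hilbert_dist_def by auto
  then show ?thesis by simp
next
  case True
  then obtain b b' where b: "0 < b" "(\<lambda>x. b * g' x - g x) \<in> C"
    and b': "0 < b'" "(\<lambda>x. b' * g x - g' x) \<in> C" and nz: "\<not> (AE x in M. g' x = 0)"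
    unfolding cone_equiv_def by auto
  define SM where "SM = {b. 0 < b \<and> (\<lambda>x. b * g' x - g x) \<in> C}"
  define Sm where "Sm = {a. 0 < a \<and> (\<lambda>x. g x - a * g' x) \<in> C}"
  define TM where "TM = {b. 0 < b \<and> (\<lambda>z. b * g' (\<pi> z) - g (\<pi> z)) \<in> D}"
  define Tm where "Tm = {a. 0 < a \<and> (\<lambda>z. g (\<pi> z) - a * g' (\<pi> z)) \<in> D}"
  have sub1: "SM \<subseteq> TM" unfolding SM_def TM_def using lift by fastforce
  have sub2: "Sm \<subseteq> Tm" unfolding Sm_def Tm_def using lift by fastforce
  have bSM: "b \<in> SM" unfolding SM_def using b by auto
  have "(\<lambda>x. (1/b') * (b' * g x - g' x)) \<in> C" using Cscale[OF b'(2), of "1/b'"] b'(1) by simp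
  moreover have "(\<lambda>x. (1/b') * (b' * g x - g' x)) = (\<lambda>x. g x - (1/b') * g' x)"
    using b'(1) by (auto simp: field_simps)
  ultimately have b'Sm: "1/b' \<in> Sm" unfolding Sm_def using b'(1) by auto
  have key: "a \<le> \<beta>" if a: "a \<in> Tm" and be: "\<beta> \<in> TM" for a \<beta>
  proof (rule ccontr)
    assume "\<not> a \<le> \<beta>"
    then have lt: "\<beta> < a" by simp
    have s: "(\<lambda>z. (\<beta> * g' (\<pi> z) - g (\<pi> z)) + (g (\<pi> z) - a * g' (\<pi> z))) \<in> D"
    proof -
      have a2: "(\<lambda>z. g (\<pi> z) - a * g' (\<pi> z)) \<in> D" using a unfolding Tm_def by auto
      have b2: "(\<lambda>z. \<beta> * g' (\<pi> z) - g (\<pi> z)) \<in> D" using be unfolding TM_def by auto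
      show ?thesis using Dadd[OF b2 a2] .
    qed
    have "(\<lambda>z. (1/(a - \<beta>)) * ((\<beta> * g' (\<pi> z) - g (\<pi> z)) + (g (\<pi> z) - a * g' (\<pi> z)))) \<in> D"
      using Dscale[OF s, of "1/(a - \<beta>)"] lt by simp
    moreover have "(\<lambda>z. (1/(a - \<beta>)) * ((\<beta> * g' (\<pi> z) - g (\<pi> z)) + (g (\<pi> z) - a * g' (\<pi> z)))) = (\<lambda>z. - g' (\<pi> z))"
      using lt by (auto simp: field_simps)
    ultimately have "(\<lambda>z. - g' (\<pi> z)) \<in> D" by simp
    then show False using pointed nz by simp
  qed
  have nzN: "\<not> (AE z in N. g' (\<pi> z) = 0)" using AEtrans nz by blast
  have ceN: "cone_equiv D (\<lambda>z. g (\<pi> z)) (\<lambda>z. g' (\<pi> z))"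
    unfolding cone_equiv_def using lift[OF b(2)] lift[OF b'(2)] b(1) b'(1) by auto
  have TMne: "TM \<noteq> {}" and SMne: "SM \<noteq> {}" using bSM sub1 by auto
  have Tmne: "Tm \<noteq> {}" and Smne: "Sm \<noteq> {}" using b'Sm sub2 by auto
  have bddT: "bdd_above Tm" using key bSM sub1 by (meson bdd_above.I subsetD)
  have bddTM: "bdd_below TM" using key b'Sm sub2 by (meson bdd_below.I subsetD)
  have bddS: "bdd_above Sm" by (rule bdd_above_mono[OF bddT sub2])
  have i1: "1/b' \<le> Inf TM" using key b'Sm sub2 TMne by (meson cInf_greatest subsetD)
  have i2: "Inf TM \<le> Inf SM" by (rule cInf_superset_mono[OF SMne bddTM sub1])
  have i3: "1/b' \<le> Sup Sm" using cSup_upper[OF b'Sm bddS] .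
  have i4: "Sup Sm \<le> Sup Tm" by (rule cSup_subset_mono[OF Smne bddT sub2])
  have pb: "0 < 1/b'" using b'(1) by simp
  have q: "Inf TM / Sup Tm \<le> Inf SM / Sup Sm"
    by (rule frac_le) (use i1 i2 i3 i4 pb in linarith)+
  have qpos: "0 < Inf TM / Sup Tm"
  proof (rule divide_pos_pos)
    show "0 < Inf TM" using i1 pb by linarith
    show "0 < Sup Tm" using i3 i4 pb by linarith
  qed
  have "ln (Inf TM / Sup Tm) \<le> ln (Inf SM / Sup Sm)" using q qpos by simp
  then show ?thesis
    unfolding hilbert_dist_def cone_M_def cone_m_def SM_def Sm_def TM_def Tm_def[symmetric]
    using True ceN nzN by (simp add: SM_def Sm_def TM_def Tm_def)
qed


lemma Gcone_scale:
  assumes "h \<in> Gcone M x0 m \<alpha> \<alpha>'" "0 < c"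
  shows "(\<lambda>x. c * h x) \<in> Gcone M x0 m \<alpha> \<alpha>'"
proof -
  have "0 \<le> (\<integral>x. f x * (c * h x) \<partial>M)" if f: "f \<in> Fcone M x0 m \<alpha> \<alpha>'" for f
  proof -
    have "(\<lambda>x. f x * (c * h x)) = (\<lambda>x. c * (f x * h x))" by (auto simp: algebra_simps)
    moreover have "0 \<le> (\<integral>x. f x * h x \<partial>M)" using assms(1) f unfolding Gcone_def by auto
    ultimately show ?thesis using assms(2) by simp
  qed
  then show ?thesis using L2_scale assms(1) unfolding Gcone_def by auto
qed

lemma Gprod_scale:
  assumes "h \<in> Gcone_prod M x0 m \<alpha>" "0 < c"
  shows "(\<lambda>x. c * h x) \<in> Gcone_prod M x0 m \<alpha>"
proof -
  have "0 \<le> (\<integral>x. f x * (c * h x) \<partial>M)" if f: "f \<in> Fcone_prod M x0 m \<alpha>" for f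
  proof -
    have "(\<lambda>x. f x * (c * h x)) = (\<lambda>x. c * (f x * h x))" by (auto simp: algebra_simps)
    moreover have "0 \<le> (\<integral>x. f x * h x \<partial>M)" using assms(1) f unfolding Gcone_prod_def by auto
    ultimately show ?thesis using assms(2) by simp
  qed
  then show ?thesis using L2_scale assms(1) unfolding Gcone_prod_def by auto
qed

lemma Gprod_add:
  assumes "h \<in> Gcone_prod M x0 m \<alpha>" "k \<in> Gcone_prod M x0 m \<alpha>"
  shows "(\<lambda>x. h x + k x) \<in> Gcone_prod M x0 m \<alpha>"
proof -
  have hL: "L2 M h" and kL: "L2 M k" using assms unfolding Gcone_prod_def by auto
  have "0 \<le> (\<integral>x. f x * (h x + k x) \<partial>M)" if f: "f \<in> Fcone_prod M x0 m \<alpha>" for f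
  proof -
    have fL: "L2 M f" using f unfolding Fcone_prod_def by auto
    have "(\<integral>x. f x * (h x + k x) \<partial>M) = (\<integral>x. f x * h x + f x * k x \<partial>M)"
      by (simp add: algebra_simps)
    also have "\<dots> = (\<integral>x. f x * h x \<partial>M) + (\<integral>x. f x * k x \<partial>M)"
      by (rule Bochner_Integration.integral_add[OF L2_mult_integrable[OF fL hL] L2_mult_integrable[OF fL kL]])
    also have "\<dots> \<ge> 0" using assms f unfolding Gcone_prod_def by (auto intro!: add_nonneg_nonneg)
    finally show ?thesis .
  qed
  then show ?thesis using L2_add[OF hL kL] unfolding Gcone_prod_def by auto
qed

lemma pointed_fst:
  fixes M1 M2 :: "'a::metric_space measure" and h :: "'a \<Rightarrow> real"
  assumes P1: "prob_space M1" and S1: "sets M1 = sets borel"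
    and P2: "prob_space M2" and S2: "sets M2 = sets borel"
    and m: "0 < m" and ta: "tail_function \<alpha>" and apos: "\<forall>r>0. 0 < \<alpha> r"
    and p1: "0 < measure M1 {x. dist x0 x \<le> m}" and p2: "0 < measure M2 {x. dist x0 x \<le> m}"
    and hL2: "L2 M1 h"
    and hp: "(\<lambda>z. h (fst z)) \<in> Gcone_prod (M1 \<Otimes>\<^sub>M M2) x0 m \<alpha>"
    and hn: "(\<lambda>z. - h (fst z)) \<in> Gcone_prod (M1 \<Otimes>\<^sub>M M2) x0 m \<alpha>"
  shows "AE x in M1. h x = 0"
proof -
  have a: "AE x in M1. h x \<le> 0"
    by (rule half_pointed[OF P1 S1 P2 S2 m ta apos p1 p2 hL2 hp hn])
  have hn': "(\<lambda>z. - (- h (fst z))) \<in> Gcone_prod (M1 \<Otimes>\<^sub>M M2) x0 m \<alpha>" using hp by simp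
  have b: "AE x in M1. - h x \<le> 0"
    by (rule half_pointed[OF P1 S1 P2 S2 m ta apos p1 p2 L2_minus[OF hL2] hn hn'])
  show ?thesis using a b by (rule AE_mp[OF _ AE_mp]) (auto intro!: AE_I2)
qed

theorem lemma5p6:
  fixes \<mu> \<nu> :: "'a::polish_space measure" and x0 :: 'a and m :: real
    and \<alpha> \<alpha>' :: "real \<Rightarrow> real"
  assumes "prob_space \<mu>" and "sets \<mu> = sets borel"
    and "prob_space \<nu>" and "sets \<nu> = sets borel"
    and "0 < m"
    and "0 < measure \<mu> {x. dist x0 x \<le> m}" and "0 < measure \<nu> {x. dist x0 x \<le> m}"
    and "tail_function \<alpha>" and "\<forall>r>0. 0 < \<alpha> r"
    and "tail_function \<alpha>'"
  shows "(\<forall>f\<in>Fcone_prod (\<mu> \<Otimes>\<^sub>M \<nu>) x0 m \<alpha>.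
            (\<lambda>x. \<integral>y. f (x, y) \<partial>\<nu>) \<in> Fcone \<mu> x0 m \<alpha> \<alpha>' \<and>
            (\<lambda>y. \<integral>x. f (x, y) \<partial>\<mu>) \<in> Fcone \<nu> x0 m \<alpha> \<alpha>')
    \<and> (\<forall>g\<in>Gcone \<mu> x0 m \<alpha> \<alpha>'. (\<lambda>z. g (fst z)) \<in> Gcone_prod (\<mu> \<Otimes>\<^sub>M \<nu>) x0 m \<alpha>)
    \<and> (\<forall>g\<in>Gcone \<mu> x0 m \<alpha> \<alpha>'. \<forall>g'\<in>Gcone \<mu> x0 m \<alpha> \<alpha>'.
         hilbert_dist (\<mu> \<Otimes>\<^sub>M \<nu>) (Gcone_prod (\<mu> \<Otimes>\<^sub>M \<nu>) x0 m \<alpha>) (\<lambda>z. g (fst z)) (\<lambda>z. g' (fst z))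
         \<le> hilbert_dist \<mu> (Gcone \<mu> x0 m \<alpha> \<alpha>') g g')
    \<and> (\<forall>g\<in>Gcone \<nu> x0 m \<alpha> \<alpha>'. (\<lambda>z. g (snd z)) \<in> Gcone_prod (\<mu> \<Otimes>\<^sub>M \<nu>) x0 m \<alpha>)
    \<and> (\<forall>g\<in>Gcone \<nu> x0 m \<alpha> \<alpha>'. \<forall>g'\<in>Gcone \<nu> x0 m \<alpha> \<alpha>'.
         hilbert_dist (\<mu> \<Otimes>\<^sub>M \<nu>) (Gcone_prod (\<mu> \<Otimes>\<^sub>M \<nu>) x0 m \<alpha>) (\<lambda>z. g (snd z)) (\<lambda>z. g' (snd z))
         \<le> hilbert_dist \<nu> (Gcone \<nu> x0 m \<alpha> \<alpha>') g g')"
proof -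
  note P1 = assms(1) and S1 = assms(2) and P2 = assms(3) and S2 = assms(4) and m = assms(5)
    and p1 = assms(6) and p2 = assms(7) and ta = assms(8) and apos = assms(9) and ta' = assms(10)
  have pp: "pair_prob_space \<mu> \<nu>"
    by (simp add: P1 P2 pair_prob_space_def pair_sigma_finite_def prob_space_imp_sigma_finite)
  have pp': "pair_prob_space \<nu> \<mu>"
    by (simp add: P1 P2 pair_prob_space_def pair_sigma_finite_def prob_space_imp_sigma_finite)
  have ps: "pair_sigma_finite \<mu> \<nu>" using pp unfolding pair_prob_space_def by auto
  have ps': "pair_sigma_finite \<nu> \<mu>" using pp' unfolding pair_prob_space_def by auto
  interpret pair_prob_space \<mu> \<nu> by fact
  have part1: "\<forall>f\<in>Fcone_prod (\<mu> \<Otimes>\<^sub>M \<nu>) x0 m \<alpha>.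
            (\<lambda>x. \<integral>y. f (x, y) \<partial>\<nu>) \<in> Fcone \<mu> x0 m \<alpha> \<alpha>' \<and>
            (\<lambda>y. \<integral>x. f (x, y) \<partial>\<mu>) \<in> Fcone \<nu> x0 m \<alpha> \<alpha>'"
  proof
    fix f assume f: "f \<in> Fcone_prod (\<mu> \<Otimes>\<^sub>M \<nu>) x0 m \<alpha>"
    show "(\<lambda>x. \<integral>y. f (x, y) \<partial>\<nu>) \<in> Fcone \<mu> x0 m \<alpha> \<alpha>' \<and>
            (\<lambda>y. \<integral>x. f (x, y) \<partial>\<mu>) \<in> Fcone \<nu> x0 m \<alpha> \<alpha>'"
      using marg_fst[OF P1 S1 P2 S2 m ta' f] marg_fst[OF P2 S2 P1 S1 m ta' Fprod_swap[OF ps f S1 S2]]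
      by simp
  qed
  have lift1: "(\<lambda>z. g (fst z)) \<in> Gcone_prod (\<mu> \<Otimes>\<^sub>M \<nu>) x0 m \<alpha>" if "g \<in> Gcone \<mu> x0 m \<alpha> \<alpha>'" for g
    by (rule Glift_fst[OF P1 S1 P2 S2 m ta' that])
  have lift2: "(\<lambda>z. g (snd z)) \<in> Gcone_prod (\<mu> \<Otimes>\<^sub>M \<nu>) x0 m \<alpha>" if "g \<in> Gcone \<nu> x0 m \<alpha> \<alpha>'" for g
    using Gprod_swap[OF ps' Glift_fst[OF P2 S2 P1 S1 m ta' that] S2 S1] by simp
  have part3: "hilbert_dist (\<mu> \<Otimes>\<^sub>M \<nu>) (Gcone_prod (\<mu> \<Otimes>\<^sub>M \<nu>) x0 m \<alpha>) (\<lambda>z. g (fst z)) (\<lambda>z. g' (fst z))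
         \<le> hilbert_dist \<mu> (Gcone \<mu> x0 m \<alpha> \<alpha>') g g'"
    if g': "g' \<in> Gcone \<mu> x0 m \<alpha> \<alpha>'" for g g'
  proof (rule hilbert_mono[where \<pi>=fst])
    show "(\<lambda>z. h (fst z)) \<in> Gcone_prod (\<mu> \<Otimes>\<^sub>M \<nu>) x0 m \<alpha>" if "h \<in> Gcone \<mu> x0 m \<alpha> \<alpha>'" for h
      using lift1 that .
    show "(\<lambda>x. c * h x) \<in> Gcone \<mu> x0 m \<alpha> \<alpha>'" if "h \<in> Gcone \<mu> x0 m \<alpha> \<alpha>'" "0 < c" for h c
      using Gcone_scale that .
    show "(\<lambda>x. c * h x) \<in> Gcone_prod (\<mu> \<Otimes>\<^sub>M \<nu>) x0 m \<alpha>" if "h \<in> Gcone_prod (\<mu> \<Otimes>\<^sub>M \<nu>) x0 m \<alpha>" "0 < c" for h c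
      using Gprod_scale that .
    show "(\<lambda>x. h x + k x) \<in> Gcone_prod (\<mu> \<Otimes>\<^sub>M \<nu>) x0 m \<alpha>"
      if "h \<in> Gcone_prod (\<mu> \<Otimes>\<^sub>M \<nu>) x0 m \<alpha>" "k \<in> Gcone_prod (\<mu> \<Otimes>\<^sub>M \<nu>) x0 m \<alpha>" for h k
      using Gprod_add that .
    show "g' \<in> Gcone \<mu> x0 m \<alpha> \<alpha>'" by fact
    have gL: "L2 \<mu> g'" using g' unfolding Gcone_def by auto
    show "AE x in \<mu>. g' x = 0" if "(\<lambda>z. - g' (fst z)) \<in> Gcone_prod (\<mu> \<Otimes>\<^sub>M \<nu>) x0 m \<alpha>"
      by (rule pointed_fst[OF P1 S1 P2 S2 m ta apos p1 p2 gL lift1[OF g'] that])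
    show "AE x in \<mu>. g' x = 0" if "AE z in \<mu> \<Otimes>\<^sub>M \<nu>. g' (fst z) = 0"
      using AE_pair[OF that] by simp
  qed
  have part5: "hilbert_dist (\<mu> \<Otimes>\<^sub>M \<nu>) (Gcone_prod (\<mu> \<Otimes>\<^sub>M \<nu>) x0 m \<alpha>) (\<lambda>z. g (snd z)) (\<lambda>z. g' (snd z))
         \<le> hilbert_dist \<nu> (Gcone \<nu> x0 m \<alpha> \<alpha>') g g'"
    if g': "g' \<in> Gcone \<nu> x0 m \<alpha> \<alpha>'" for g g'
  proof (rule hilbert_mono[where \<pi>=snd])
    show "(\<lambda>z. h (snd z)) \<in> Gcone_prod (\<mu> \<Otimes>\<^sub>M \<nu>) x0 m \<alpha>" if "h \<in> Gcone \<nu> x0 m \<alpha> \<alpha>'" for h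
      using lift2 that .
    show "(\<lambda>x. c * h x) \<in> Gcone \<nu> x0 m \<alpha> \<alpha>'" if "h \<in> Gcone \<nu> x0 m \<alpha> \<alpha>'" "0 < c" for h c
      using Gcone_scale that .
    show "(\<lambda>x. c * h x) \<in> Gcone_prod (\<mu> \<Otimes>\<^sub>M \<nu>) x0 m \<alpha>" if "h \<in> Gcone_prod (\<mu> \<Otimes>\<^sub>M \<nu>) x0 m \<alpha>" "0 < c" for h c
      using Gprod_scale that .
    show "(\<lambda>x. h x + k x) \<in> Gcone_prod (\<mu> \<Otimes>\<^sub>M \<nu>) x0 m \<alpha>"
      if "h \<in> Gcone_prod (\<mu> \<Otimes>\<^sub>M \<nu>) x0 m \<alpha>" "k \<in> Gcone_prod (\<mu> \<Otimes>\<^sub>M \<nu>) x0 m \<alpha>" for h k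
      using Gprod_add that .
    show "g' \<in> Gcone \<nu> x0 m \<alpha> \<alpha>'" by fact
    have gL: "L2 \<nu> g'" using g' unfolding Gcone_def by auto
    have gm[measurable]: "g' \<in> borel_measurable \<nu>" using gL unfolding L2_def by auto
    show "AE x in \<nu>. g' x = 0" if "(\<lambda>z. - g' (snd z)) \<in> Gcone_prod (\<mu> \<Otimes>\<^sub>M \<nu>) x0 m \<alpha>"
    proof -
      have "(\<lambda>z. - g' (fst z)) \<in> Gcone_prod (\<nu> \<Otimes>\<^sub>M \<mu>) x0 m \<alpha>"
        using Gprod_swap[OF ps that S1 S2] by simp
      then show ?thesis
        by (rule pointed_fst[OF P2 S2 P1 S1 m ta apos p2 p1 gL Glift_fst[OF P2 S2 P1 S1 m ta' g']])
    qed
    show "AE x in \<nu>. g' x = 0" if "AE z in \<mu> \<Otimes>\<^sub>M \<nu>. g' (snd z) = 0"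
    proof -
      have "AE z in \<nu> \<Otimes>\<^sub>M \<mu>. g' (snd (snd z, fst z)) = 0"
        by (rule AE_swap[OF ps _ that]) measurable
      then have "AE z in \<nu> \<Otimes>\<^sub>M \<mu>. g' (fst z) = 0" by simp
      then show ?thesis using pair_sigma_finite.AE_pair[OF ps'] prob_space.AE_const[OF P1] by force
    qed
  qed
  show ?thesis using part1 lift1 lift2 part3 part5 by blast
qed

end
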